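(* In the setting of the weighted M-posterior, assume there is $\delta>0$ such that the prior density $\pi$ is continuous and positive on the ball $B_{\theta^*}(\delta)\subseteq\Theta$, and that the Weighted M-LAN condition holds. Then for any $\eta,\epsilon>0$ there exist a sequence $r_n\to+\infty$ and an integer $N(\eta,\epsilon)$ such that for all $n>N(\eta,\epsilon)$, $$P_0\Big(\sup_{g,h\in\overline B_{\mathbf 0}(r_n)}f_n(g,h)>\eta\Big)\le\epsilon,$$ where $\overline B_{\mathbf 0}(r)$ is the closed ball of radius $r$ about $\mathbf 0\in\mathbb R^p$.
   Context: $X_1,X_2,\dots$ i.i.d. from $P_0$, $\theta^*$ interior to $\Theta\subseteq\mathbb R^p$, loss $\rho$, score $\psi=\nabla_\theta\rho$, positive weights $\alpha_i$ with $\limsup_n n^{-1}\sum_{i\le n}\alpha_i^2<\infty$, $\bar\alpha_n=n^{-1}\sum_{i\le n}\alpha_i$, weighted M-estimator $\hat\theta^{\boldsymbol\alpha}_\rho$ solving $\sum_i\alpha_i\psi(X_i,\theta)=0$, weighted M-posterior $\pi_n^\rho(\theta\mid F_n^{\boldsymbol\alpha})\propto\exp(-\sum_{i=1}^n\alpha_i\rho(X_i,\theta))\pi(\theta)$. Set $\Delta_n=\sqrt n(\hat\theta^{\boldsymbol\alpha}_\rho-\theta^* )$, $\phi_n(h)=\phi(h\mid\Delta_n,V_{\theta^*}^{-1}/\bar\alpha_n)$ (normal density), $\pi^{\mathrm{W}}_n(h)=n^{-p/2}\pi_n^\rho(\theta^*+h/\sqrt n\mid F_n^{\boldsymbol\alpha})$,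 and $f_n(g,h)=\big\{1-\frac{\phi_n(h)\,\pi^{\mathrm W}_n(g)}{\pi^{\mathrm W}_n(h)\,\phi_n(g)}\big\}^+$. Weighted M-LAN condition: there is a positive definite $V_{\theta^*}$ such that $R_{n,\boldsymbol\alpha}(h)=\sum_{i=1}^n\alpha_i(\rho(X_i,\theta^* )-\rho(X_i,\theta^*+h/\sqrt n))-h^\top\bar\alpha_nV_{\theta^*}\Delta_n+\frac12h^\top\bar\alpha_nV_{\theta^*}h$ satisfies $\sup_{h\in K}|R_{n,\boldsymbol\alpha}(h)|\to0$ in $P_0$-probability for every compact $K$. *)

theory Defs
  imports "HOL-Probability.Probability"
begin

text \<open>Outer probability (used to avoid measurability issues of suprema events).\<close>
definition outer_prob :: "'w measure \<Rightarrow> 'w set \<Rightarrow> real" where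
  "outer_prob M A = Inf {measure M B | B. B \<in> sets M \<and> A \<inter> space M \<subseteq> B}"

definition mvnormal_density :: "real^'d \<Rightarrow> real^'d^'d \<Rightarrow> real^'d \<Rightarrow> real" where
  "mvnormal_density mu S h =
     exp (- (1/2) * ((h - mu) \<bullet> (matrix_inv S *v (h - mu))))
     / sqrt ((2 * pi) ^ CARD('d) * det S)"

definition abar :: "(nat \<Rightarrow> real) \<Rightarrow> nat \<Rightarrow> real" where
  "abar \<alpha> n = (\<Sum>i=1..n. \<alpha> i) / real n"

definition unnorm_post ::
  "('x \<Rightarrow> 'p \<Rightarrow> real) \<Rightarrow> (nat \<Rightarrow> real) \<Rightarrow> ('p \<Rightarrow> real) \<Rightarrow> 'p set
     \<Rightarrow> (nat \<Rightarrow> 'x) \<Rightarrow> nat \<Rightarrow> 'p \<Rightarrow> real" where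
  "unnorm_post \<rho> \<alpha> \<pi> \<Theta> x n \<theta> =
     (if \<theta> \<in> \<Theta> then exp (- (\<Sum>i=1..n. \<alpha> i * \<rho> (x i) \<theta>)) * \<pi> \<theta> else 0)"

definition wpost ::
  "('x \<Rightarrow> 'p::euclidean_space \<Rightarrow> real) \<Rightarrow> (nat \<Rightarrow> real) \<Rightarrow> ('p \<Rightarrow> real) \<Rightarrow> 'p set
     \<Rightarrow> (nat \<Rightarrow> 'x) \<Rightarrow> nat \<Rightarrow> 'p \<Rightarrow> real" where
  "wpost \<rho> \<alpha> \<pi> \<Theta> x n \<theta> =
     unnorm_post \<rho> \<alpha> \<pi> \<Theta> x n \<theta> / (\<integral>t. unnorm_post \<rho> \<alpha> \<pi> \<Theta> x n t \<partial>lborel)"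

definition piW ::
  "('x \<Rightarrow> real^'d \<Rightarrow> real) \<Rightarrow> (nat \<Rightarrow> real) \<Rightarrow> (real^'d \<Rightarrow> real) \<Rightarrow> (real^'d) set
     \<Rightarrow> real^'d \<Rightarrow> (nat \<Rightarrow> 'x) \<Rightarrow> nat \<Rightarrow> real^'d \<Rightarrow> real" where
  "piW \<rho> \<alpha> \<pi> \<Theta> \<theta>s x n h =
     real n powr (- real CARD('d) / 2) * wpost \<rho> \<alpha> \<pi> \<Theta> x n (\<theta>s + (1 / sqrt (real n)) *\<^sub>R h)"

definition phin :: "(nat \<Rightarrow> real) \<Rightarrow> real^'d^'d \<Rightarrow> real^'d \<Rightarrow> nat \<Rightarrow> real^'d \<Rightarrow> real" where
  "phin \<alpha> V \<Delta> n h = mvnormal_density \<Delta> ((1 / abar \<alpha> n) *\<^sub>R matrix_inv V) h"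

definition fn ::
  "('x \<Rightarrow> real^'d \<Rightarrow> real) \<Rightarrow> (nat \<Rightarrow> real) \<Rightarrow> (real^'d \<Rightarrow> real) \<Rightarrow> (real^'d) set
     \<Rightarrow> real^'d \<Rightarrow> real^'d^'d \<Rightarrow> real^'d \<Rightarrow> (nat \<Rightarrow> 'x) \<Rightarrow> nat \<Rightarrow> real^'d \<Rightarrow> real^'d \<Rightarrow> real" where
  "fn \<rho> \<alpha> \<pi> \<Theta> \<theta>s V \<Delta> x n g h =
     max 0 (1 - (phin \<alpha> V \<Delta> n h * piW \<rho> \<alpha> \<pi> \<Theta> \<theta>s x n g)
                / (piW \<rho> \<alpha> \<pi> \<Theta> \<theta>s x n h * phin \<alpha> V \<Delta> n g))"

definition lan_rem ::
  "('x \<Rightarrow> real^'d \<Rightarrow> real) \<Rightarrow> (nat \<Rightarrow> real) \<Rightarrow> real^'d \<Rightarrow> real^'d^'d \<Rightarrow> real^'d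
     \<Rightarrow> (nat \<Rightarrow> 'x) \<Rightarrow> nat \<Rightarrow> real^'d \<Rightarrow> real" where
  "lan_rem \<rho> \<alpha> \<theta>s V \<Delta> x n h =
     (\<Sum>i=1..n. \<alpha> i * (\<rho> (x i) \<theta>s - \<rho> (x i) (\<theta>s + (1 / sqrt (real n)) *\<^sub>R h)))
     - h \<bullet> (abar \<alpha> n *\<^sub>R (V *v \<Delta>))
     + (1/2) * (h \<bullet> (abar \<alpha> n *\<^sub>R (V *v h)))"

end

theory Submission imports Defs begin

lemma scal_mult: fixes A B :: "real^'d^'d" shows "(c *\<^sub>R A) ** (d *\<^sub>R B) = (c*d) *\<^sub>R (A ** B)"
  by (simp add: matrix_matrix_mult_def vec_eq_iff sum_distrib_left mult_ac)

lemma inv_scaled: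
  fixes V :: "real^'d^'d"
  assumes pd: "\<And>h. h \<noteq> 0 \<Longrightarrow> h \<bullet> (V *v h) > 0" and a: "a > 0"
  shows "matrix_inv ((1/a) *\<^sub>R matrix_inv V) = a *\<^sub>R V \<and> det ((1/a) *\<^sub>R matrix_inv V) \<noteq> 0"
proof -
  have "\<forall>x. V *v x = 0 \<longrightarrow> x = 0"
    using pd by (metis inner_zero_right less_irrefl)
  then have "\<exists>B. B ** V = mat 1" using matrix_left_invertible_ker by blast
  then have "invertible V" using invertible_left_inverse by blast
  then have "\<exists>A'. V ** A' = mat 1 \<and> A' ** V = mat 1" unfolding invertible_def by blast
  then have VI: "V ** matrix_inv V = mat 1 \<and> matrix_inv V ** V = mat 1"
    unfolding matrix_inv_def by (rule someI_ex)
  define S where "S = (1/a) *\<^sub>R matrix_inv V"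
  have S1: "S ** (a *\<^sub>R V) = mat 1" "(a *\<^sub>R V) ** S = mat 1"
    using VI a by (simp_all add: S_def scal_mult)
  then have "\<exists>A'. S ** A' = mat 1 \<and> A' ** S = mat 1" by blast
  then have SI: "S ** matrix_inv S = mat 1 \<and> matrix_inv S ** S = mat 1"
    unfolding matrix_inv_def by (rule someI_ex)
  have "matrix_inv S = matrix_inv S ** (S ** (a *\<^sub>R V))" using S1 by simp
  also have "\<dots> = a *\<^sub>R V" using SI by (simp add: matrix_mul_assoc)
  finally have 1: "matrix_inv S = a *\<^sub>R V" .
  have "det S * det (a *\<^sub>R V) = 1" using S1 by (metis det_I det_mul)
  then have "det S \<noteq> 0" by auto
  with 1 show ?thesis by (simp add: S_def)
qed

lemma sym_dot: fixes V :: "real^'d^'d" assumes "transpose V = V"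
  shows "u \<bullet> (V *v w) = w \<bullet> (V *v u)"
proof -
  have "u \<bullet> (V *v w) = (u v* V) \<bullet> w" by (simp add: dot_lmul_matrix)
  also have "u v* V = V *v u" by (metis assms vector_transpose_matrix)
  finally show ?thesis by (simp add: inner_commute)
qed

lemma quad_expand: fixes V :: "real^'d^'d" assumes "transpose V = V"
  shows "(y - D) \<bullet> ((a *\<^sub>R V) *v (y - D)) = a * (y \<bullet> (V *v y)) - 2 * a * (y \<bullet> (V *v D)) + a * (D \<bullet> (V *v D))"
proof -
  have s: "D \<bullet> (V *v y) = y \<bullet> (V *v D)" using sym_dot[OF assms] .
  have "(y - D) \<bullet> ((a *\<^sub>R V) *v (y - D)) = a * ((y - D) \<bullet> (V *v (y - D)))"
    by (metis inner_scaleR_right scaleR_matrix_vector_assoc)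
  also have "(y - D) \<bullet> (V *v (y - D)) = y \<bullet> (V *v y) - y \<bullet> (V *v D) - D \<bullet> (V *v y) + D \<bullet> (V *v D)"
    by (simp add: matrix_vector_mult_diff_distrib inner_diff_left inner_diff_right)
  finally show ?thesis using s by (simp add: algebra_simps)
qed

lemma ratio_formula:
  fixes V :: "real^'d^'d" and \<rho> :: "'x \<Rightarrow> real^'d \<Rightarrow> real"
  assumes n1: "n \<ge> 1" and ab: "abar \<alpha> n > 0"
    and Z: "(\<integral>t. unnorm_post \<rho> \<alpha> \<pi> \<Theta> x n t \<partial>lborel) \<noteq> 0"
    and pd: "\<And>h. h \<noteq> 0 \<Longrightarrow> h \<bullet> (V *v h) > 0" and Vs: "transpose V = V"
    and g: "\<theta>s + (1 / sqrt (real n)) *\<^sub>R g \<in> \<Theta>"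
    and h: "\<theta>s + (1 / sqrt (real n)) *\<^sub>R h \<in> \<Theta>"
    and ph: "\<pi> (\<theta>s + (1 / sqrt (real n)) *\<^sub>R h) \<noteq> 0"
  shows "(phin \<alpha> V \<Delta> n h * piW \<rho> \<alpha> \<pi> \<Theta> \<theta>s x n g) / (piW \<rho> \<alpha> \<pi> \<Theta> \<theta>s x n h * phin \<alpha> V \<Delta> n g)
    = exp (lan_rem \<rho> \<alpha> \<theta>s V \<Delta> x n g - lan_rem \<rho> \<alpha> \<theta>s V \<Delta> x n h)
      * (\<pi> (\<theta>s + (1 / sqrt (real n)) *\<^sub>R g) / \<pi> (\<theta>s + (1 / sqrt (real n)) *\<^sub>R h))"
proof -
  define a where "a = abar \<alpha> n"
  have a: "a > 0" using ab a_def by simp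
  have MI: "matrix_inv ((1/a) *\<^sub>R matrix_inv V) = a *\<^sub>R V" and dn: "det ((1/a) *\<^sub>R matrix_inv V) \<noteq> 0"
    using inv_scaled[OF pd a] by auto
  define D where "D = sqrt ((2 * pi) ^ CARD('d) * det ((1/a) *\<^sub>R matrix_inv V))"
  have D: "D \<noteq> 0" using dn by (simp add: D_def)
  define Q where "Q y = (y - \<Delta>) \<bullet> ((a *\<^sub>R V) *v (y - \<Delta>))" for y
  have phi: "phin \<alpha> V \<Delta> n y = exp (- (1/2) * Q y) / D" for y
    unfolding phin_def mvnormal_density_def Q_def D_def a_def[symmetric] MI ..
  define Z0 where "Z0 = (\<integral>t. unnorm_post \<rho> \<alpha> \<pi> \<Theta> x n t \<partial>lborel)"
  define c0 where "c0 = real n powr (- real CARD('d) / 2)"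
  define th where "th y = \<theta>s + (1 / sqrt (real n)) *\<^sub>R y" for y
  define S where "S y = (\<Sum>i=1..n. \<alpha> i * \<rho> (x i) (th y))" for y
  have piw: "th y \<in> \<Theta> \<Longrightarrow> piW \<rho> \<alpha> \<pi> \<Theta> \<theta>s x n y = c0 * (exp (- S y) * \<pi> (th y) / Z0)" for y
    unfolding piW_def wpost_def unnorm_post_def c0_def S_def th_def Z0_def by simp
  have c0: "c0 > 0" unfolding c0_def using n1 by simp
  have Z0: "Z0 \<noteq> 0" using Z Z0_def by simp
  have ph': "\<pi> (th h) \<noteq> 0" using ph th_def by simp
  have "(phin \<alpha> V \<Delta> n h * piW \<rho> \<alpha> \<pi> \<Theta> \<theta>s x n g) / (piW \<rho> \<alpha> \<pi> \<Theta> \<theta>s x n h * phin \<alpha> V \<Delta> n g)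
     = (exp (- (1/2) * Q h) * exp (- S g) * \<pi> (th g)) / (exp (- S h) * \<pi> (th h) * exp (- (1/2) * Q g))"
    using g h c0 Z0 D unfolding phi by (simp add: piw th_def field_simps)
  also have "\<dots> = exp (S h - S g - (1/2) * Q h + (1/2) * Q g) * (\<pi> (th g) / \<pi> (th h))"
  proof -
    have e: "exp (S h - S g - (1/2) * Q h + (1/2) * Q g) = exp (S h) * exp ((1/2) * Q g) / (exp (S g) * exp ((1/2) * Q h))"
      by (simp add: exp_add[symmetric] exp_diff[symmetric] algebra_simps)
    show ?thesis unfolding e using ph' by (simp add: exp_minus field_simps)
  qed
  also have "S h - S g - (1/2) * Q h + (1/2) * Q g = lan_rem \<rho> \<alpha> \<theta>s V \<Delta> x n g - lan_rem \<rho> \<alpha> \<theta>s V \<Delta> x n h"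
    unfolding Q_def quad_expand[OF Vs] lan_rem_def S_def th_def a_def
    by (simp add: sum_subtractf right_diff_distrib algebra_simps inner_scaleR_right)
  finally show ?thesis by (simp add: th_def)
qed
lemma outer_prob_mono: assumes "A \<subseteq> B" shows "outer_prob M A \<le> outer_prob M B"
  unfolding outer_prob_def
proof (rule cInf_superset_mono)
  show "{measure M C |C. C \<in> sets M \<and> B \<inter> space M \<subseteq> C} \<noteq> {}" by blast
  show "bdd_below {measure M C |C. C \<in> sets M \<and> A \<inter> space M \<subseteq> C}"
    by (rule bdd_belowI[of _ 0]) auto
  show "{measure M C |C. C \<in> sets M \<and> B \<inter> space M \<subseteq> C} \<subseteq> {measure M C |C. C \<in> sets M \<and> A \<inter> space M \<subseteq> C}"
    using assms by blast
qed

lemma diag: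
  assumes "\<And>k::nat. eventually (\<lambda>n. P k n) sequentially"
  shows "\<exists>r::nat\<Rightarrow>nat. filterlim r at_top sequentially \<and> eventually (\<lambda>n. P (r n) n) sequentially"
proof -
  have "\<forall>k. \<exists>N. \<forall>n\<ge>N. P k n" using assms by (simp add: eventually_sequentially)
  then obtain M where M: "\<And>k n. n \<ge> M k \<Longrightarrow> P k n" by metis
  define G where "G n k = (k \<le> n \<and> (\<forall>j\<le>k. M j \<le> n))" for n k
  define r where "r n = Greatest (G n)" for n
  have Gr: "G n (r n)" if "n \<ge> M 0" for n
    unfolding r_def by (rule GreatestI_nat[of _ 0 n]) (use that in \<open>auto simp: G_def\<close>)
  have ev: "eventually (\<lambda>n. P (r n) n) sequentially"
    unfolding eventually_sequentially
    by (rule exI[of _ "M 0"]) (use Gr M in \<open>auto simp: G_def\<close>)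
  have "filterlim r at_top sequentially"
    unfolding filterlim_at_top eventually_sequentially
  proof
    fix B :: nat
    define N where "N = max B (Max (M ` {..B}))"
    have "B \<le> r n" if "n \<ge> N" for n
    proof -
      have "M j \<le> n" if "j \<le> B" for j
      proof -
        have "M j \<le> Max (M ` {..B})" using that by (intro Max_ge) auto
        then show ?thesis using \<open>n \<ge> N\<close> unfolding N_def by linarith
      qed
      moreover have "B \<le> n" using that N_def by linarith
      ultimately have "G n B" unfolding G_def by blast
      then show ?thesis unfolding r_def by (rule Greatest_le_nat[of _ _ n]) (auto simp: G_def)
    qed
    then show "\<exists>N. \<forall>n\<ge>N. B \<le> r n" by blast
  qed
  with ev show ?thesis by blast
qed

lemma int_pos:
  fixes f :: "real^'d \<Rightarrow> real"
  assumes "integrable lborel f" "\<And>t. f t \<ge> 0" "\<And>t. t \<in> ball c d \<Longrightarrow> f t > 0" "d > 0"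
  shows "integral\<^sup>L lborel f > 0"
proof (rule ccontr)
  assume "\<not> ?thesis"
  moreover have "integral\<^sup>L lborel f \<ge> 0" using assms(2) by (simp add: integral_nonneg_AE)
  ultimately have "integral\<^sup>L lborel f = 0" by simp
  then have "AE t in lborel. f t = 0" using integral_nonneg_eq_0_iff_AE[OF assms(1)] assms(2) by simp
  then have "AE t in lborel. t \<notin> ball c d" by eventually_elim (use assms(3) in force)
  then have "emeasure lborel (ball c d) = 0"
    by (subst (asm) AE_iff_measurable[of "ball c d"]) auto
  moreover have "measure lborel (ball c d) > 0" using content_ball_pos[OF assms(4)] .
  ultimately show False by (simp add: measure_def)
qed

theorem mainTheorem3:
  fixes M :: "'w measure" and Mx :: "'x measure" and P0 :: "'x measure"
    and X :: "nat \<Rightarrow> 'w \<Rightarrow> 'x"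
    and \<Theta> :: "(real^'d) set" and \<theta>s :: "real^'d"
    and \<rho> :: "'x \<Rightarrow> real^'d \<Rightarrow> real" and \<psi> :: "'x \<Rightarrow> real^'d \<Rightarrow> real^'d"
    and \<alpha> :: "nat \<Rightarrow> real"
    and \<theta>hat :: "nat \<Rightarrow> 'w \<Rightarrow> real^'d"
    and \<pi> :: "real^'d \<Rightarrow> real"
    and V :: "real^'d^'d"
    and \<delta> :: real
  defines "\<Delta> \<equiv> \<lambda>n \<omega>. sqrt (real n) *\<^sub>R (\<theta>hat n \<omega> - \<theta>s)"
  assumes P: "prob_space M"
    and X_meas: "\<And>i. X i \<in> measurable M Mx"
    and X_indep: "prob_space.indep_vars M (\<lambda>_. Mx) X UNIV"
    and X_distr: "\<And>i. distr M Mx (X i) = P0"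
    and theta_int: "\<theta>s \<in> interior \<Theta>"
    and score: "\<And>x \<theta>. \<theta> \<in> interior \<Theta> \<Longrightarrow> (\<rho> x has_derivative (\<lambda>v. \<psi> x \<theta> \<bullet> v)) (at \<theta>)"
    and alpha_pos: "\<And>i. \<alpha> i > 0"
    and alpha_sq: "limsup (\<lambda>n. ereal ((\<Sum>i=1..n. (\<alpha> i)\<^sup>2) / real n)) < \<infinity>"
    and est_in: "\<And>n \<omega>. \<omega> \<in> space M \<Longrightarrow> \<theta>hat n \<omega> \<in> \<Theta>"
    and est_eq: "\<And>n \<omega>. \<omega> \<in> space M \<Longrightarrow> (\<Sum>i=1..n. \<alpha> i *\<^sub>R \<psi> (X i \<omega>) (\<theta>hat n \<omega>)) = 0"
    and prior_nonneg: "\<And>\<theta>. \<theta> \<in> \<Theta> \<Longrightarrow> \<pi> \<theta> \<ge> 0"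
    and post_proper: "\<And>n \<omega>. \<omega> \<in> space M \<Longrightarrow>
          integrable lborel (unnorm_post \<rho> \<alpha> \<pi> \<Theta> (\<lambda>i. X i \<omega>) n)"
    and delta_pos: "\<delta> > 0"
    and ball_sub: "ball \<theta>s \<delta> \<subseteq> \<Theta>"
    and prior_cont: "continuous_on (ball \<theta>s \<delta>) \<pi>"
    and prior_pos: "\<And>\<theta>. \<theta> \<in> ball \<theta>s \<delta> \<Longrightarrow> \<pi> \<theta> > 0"
    and V_sym: "transpose V = V"
    and V_pd: "\<And>h. h \<noteq> 0 \<Longrightarrow> h \<bullet> (V *v h) > 0"
    and LAN: "\<And>K e. compact K \<Longrightarrow> e > 0 \<Longrightarrow>
          (\<lambda>n. outer_prob M {\<omega> \<in> space M. \<exists>h\<in>K.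
              \<bar>lan_rem \<rho> \<alpha> \<theta>s V (\<Delta> n \<omega>) (\<lambda>i. X i \<omega>) n h\<bar> > e}) \<longlonglongrightarrow> 0"
  shows "\<forall>\<eta>>0. \<forall>\<epsilon>>0. \<exists>r :: nat \<Rightarrow> real. filterlim r at_top sequentially \<and>
          (\<exists>N::nat. \<forall>n>N.
             outer_prob M {\<omega> \<in> space M. \<exists>g\<in>cball 0 (r n). \<exists>h\<in>cball 0 (r n).
                fn \<rho> \<alpha> \<pi> \<Theta> \<theta>s V (\<Delta> n \<omega>) (\<lambda>i. X i \<omega>) n g h > \<eta>} \<le> \<epsilon>)"
proof (intro allI impI)
  fix \<eta> \<epsilon> :: real assume eta: "\<eta> > 0" and eps: "\<epsilon> > 0"
  interpret prob_space M by (rule P)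
  obtain s where s0: "0 < s" and s1: "s < 1" and ss: "1 - \<eta> \<le> s * s"
  proof -
    define q where "q = sqrt (max 0 (1 - \<eta>))"
    have q0: "0 \<le> q" and q1: "q < 1" unfolding q_def using eta by (auto simp: max_def)
    have qq: "q * q = max 0 (1 - \<eta>)" unfolding q_def by simp
    define s where "s = (1 + q) / 2"
    have "q \<le> s" unfolding s_def using q1 by simp
    then have "q * q \<le> s * s" using q0 by (intro mult_mono) auto
    then have "1 - \<eta> \<le> s * s" using qq by linarith
    moreover have "0 < s" "s < 1" unfolding s_def using q0 q1 by auto
    ultimately show ?thesis using that by blast
  qed
  define c where "c = - ln s / 2"
  have c0: "c > 0" unfolding c_def using s0 s1 by simp
  have ec: "exp (- 2 * c) = s" unfolding c_def using s0 by simp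
  define t where "t = (1 - s) / (1 + s)"
  have t0: "t > 0" unfolding t_def using s0 s1 by simp
  have ts: "(1 - t) / (1 + t) = s" unfolding t_def using s0 by (simp add: field_simps)
  have thin: "\<theta>s \<in> ball \<theta>s \<delta>" using delta_pos by simp
  define p0 where "p0 = \<pi> \<theta>s"
  have p0: "p0 > 0" unfolding p0_def using prior_pos thin by blast
  have "isCont \<pi> \<theta>s" using continuous_on_interior[OF prior_cont] thin by (simp add: interior_open)
  then have "\<forall>\<^sub>F x in at \<theta>s. dist (\<pi> x) p0 < t * p0"
    unfolding isCont_def p0_def using t0 p0 p0_def by (intro tendstoD) auto
  then obtain r1 where r1: "r1 > 0" and r1p: "\<And>x. x \<noteq> \<theta>s \<Longrightarrow> dist x \<theta>s < r1 \<Longrightarrow> dist (\<pi> x) p0 < t * p0"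
    unfolding eventually_at by blast
  define r0 where "r0 = min r1 \<delta>"
  have r0: "r0 > 0" unfolding r0_def using r1 delta_pos by simp
  have near: "\<bar>\<pi> x - p0\<bar> \<le> t * p0" "x \<in> ball \<theta>s \<delta>" if "dist x \<theta>s < r0" for x
  proof -
    show "\<bar>\<pi> x - p0\<bar> \<le> t * p0"
    proof (cases "x = \<theta>s")
      case True then show ?thesis using t0 p0 p0_def by simp
    next
      case False then show ?thesis using r1p[of x] that unfolding r0_def by (simp add: dist_real_def)
    qed
    show "x \<in> ball \<theta>s \<delta>" using that unfolding r0_def by (simp add: dist_commute)
  qed
  define R where "R n \<omega> h = lan_rem \<rho> \<alpha> \<theta>s V (\<Delta> n \<omega>) (\<lambda>i. X i \<omega>) n h" for n \<omega> h
  have key: "fn \<rho> \<alpha> \<pi> \<Theta> \<theta>s V (\<Delta> n \<omega>) (\<lambda>i. X i \<omega>) n g h \<le> \<eta>"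
    if om: "\<omega> \<in> space M" and n1: "n \<ge> 1" and kn: "real k < r0 * sqrt (real n)"
      and g: "g \<in> cball 0 (real k)" and h: "h \<in> cball 0 (real k)"
      and Rg: "\<bar>R n \<omega> g\<bar> \<le> c" and Rh: "\<bar>R n \<omega> h\<bar> \<le> c"
    for \<omega> n k g h
  proof -
    have sn: "sqrt (real n) > 0" using n1 by simp
    have inb: "dist (\<theta>s + (1 / sqrt (real n)) *\<^sub>R y) \<theta>s < r0" if "y \<in> cball 0 (real k)" for y
    proof -
      have "dist (\<theta>s + (1 / sqrt (real n)) *\<^sub>R y) \<theta>s = norm y / sqrt (real n)"
        using sn by (simp add: dist_norm)
      also have "\<dots> \<le> real k / sqrt (real n)" using that sn by (simp add: divide_right_mono)
      also have "\<dots> < r0" using kn sn by (simp add: divide_less_eq mult.commute)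
      finally show ?thesis .
    qed
    define \<theta>g where "\<theta>g = \<theta>s + (1 / sqrt (real n)) *\<^sub>R g"
    define \<theta>h where "\<theta>h = \<theta>s + (1 / sqrt (real n)) *\<^sub>R h"
    have bg: "\<bar>\<pi> \<theta>g - p0\<bar> \<le> t * p0" "\<theta>g \<in> ball \<theta>s \<delta>" using near inb[OF g] \<theta>g_def by auto
    have bh: "\<bar>\<pi> \<theta>h - p0\<bar> \<le> t * p0" "\<theta>h \<in> ball \<theta>s \<delta>" using near inb[OF h] \<theta>h_def by auto
    have pg: "\<pi> \<theta>g > 0" and ph: "\<pi> \<theta>h > 0" using prior_pos bg bh by auto
    have ab: "abar \<alpha> n > 0" unfolding abar_def using n1 alpha_pos
      by (intro divide_pos_pos sum_pos) auto
    have Z: "(\<integral>t. unnorm_post \<rho> \<alpha> \<pi> \<Theta> (\<lambda>i. X i \<omega>) n t \<partial>lborel) > 0"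
    proof (rule int_pos[OF post_proper[OF om] _ _ delta_pos])
      show "0 \<le> unnorm_post \<rho> \<alpha> \<pi> \<Theta> (\<lambda>i. X i \<omega>) n t" for t
        unfolding unnorm_post_def using prior_nonneg by simp
      show "0 < unnorm_post \<rho> \<alpha> \<pi> \<Theta> (\<lambda>i. X i \<omega>) n t" if "t \<in> ball \<theta>s \<delta>" for t
        unfolding unnorm_post_def using prior_pos[OF that] ball_sub that by auto
    qed
    have rat: "(phin \<alpha> V (\<Delta> n \<omega>) n h * piW \<rho> \<alpha> \<pi> \<Theta> \<theta>s (\<lambda>i. X i \<omega>) n g) / (piW \<rho> \<alpha> \<pi> \<Theta> \<theta>s (\<lambda>i. X i \<omega>) n h * phin \<alpha> V (\<Delta> n \<omega>) n g)
      = exp (R n \<omega> g - R n \<omega> h) * (\<pi> \<theta>g / \<pi> \<theta>h)"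
      unfolding R_def \<theta>g_def \<theta>h_def
      by (rule ratio_formula[OF n1 ab _ V_pd V_sym]) (use Z bg bh ball_sub ph \<theta>g_def \<theta>h_def in auto)
    have e1: "exp (R n \<omega> g - R n \<omega> h) \<ge> s"
    proof -
      have "- 2 * c \<le> R n \<omega> g - R n \<omega> h" using Rg Rh by linarith
      then have "exp (- 2 * c) \<le> exp (R n \<omega> g - R n \<omega> h)" by simp
      then show ?thesis using ec by linarith
    qed
    have e2: "\<pi> \<theta>g / \<pi> \<theta>h \<ge> s"
    proof -
      have "(1 - t) * p0 \<le> \<pi> \<theta>g" "\<pi> \<theta>h \<le> (1 + t) * p0" using bg bh by (auto simp: algebra_simps abs_le_iff)
      then have "((1 - t) * p0) / ((1 + t) * p0) \<le> \<pi> \<theta>g / \<pi> \<theta>h"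
        using ph p0 t0 pg by (intro frac_le) auto
      then show ?thesis using ts p0 by simp
    qed
    have "s * s \<le> exp (R n \<omega> g - R n \<omega> h) * (\<pi> \<theta>g / \<pi> \<theta>h)"
      using e1 e2 s0 by (intro mult_mono) auto
    then show ?thesis unfolding fn_def rat using ss eta by simp
  qed
  define E where "E n k = {\<omega> \<in> space M. \<exists>h\<in>cball 0 (real k). \<bar>R n \<omega> h\<bar> > c}" for n k
  define Pk where "Pk k n = (n \<ge> 1 \<and> real k < r0 * sqrt (real n) \<and> outer_prob M (E n k) < \<epsilon>)" for k n
  have evP: "eventually (\<lambda>n. Pk k n) sequentially" for k
  proof -
    have ev1: "eventually (\<lambda>n::nat. n \<ge> 1) sequentially" by (rule eventually_ge_at_top)
    have ev2: "eventually (\<lambda>n. real k < r0 * sqrt (real n)) sequentially"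
    proof -
      have "eventually (\<lambda>n::nat. n \<ge> nat \<lceil>(real k / r0)\<^sup>2\<rceil> + 1) sequentially" by (rule eventually_ge_at_top)
      then show ?thesis
      proof eventually_elim
        case (elim n)
        then have "(real k / r0)\<^sup>2 < real n" by linarith
        then have "real k / r0 < sqrt (real n)" by (rule real_less_rsqrt)
        then show ?case using r0 by (simp add: divide_less_eq mult.commute)
      qed
    qed
    have "(\<lambda>n. outer_prob M (E n k)) \<longlonglongrightarrow> 0"
      unfolding E_def R_def by (rule LAN[OF compact_cball c0])
    then have ev3: "eventually (\<lambda>n. outer_prob M (E n k) < \<epsilon>) sequentially"
      using eps by (rule order_tendstoD)
    show ?thesis using ev1 ev2 ev3 unfolding Pk_def by eventually_elim auto
  qed
  obtain r :: "nat \<Rightarrow> nat" where rlim: "filterlim r at_top sequentially"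
    and rev: "eventually (\<lambda>n. Pk (r n) n) sequentially"
    using diag[of Pk, OF evP] by blast
  obtain N where N: "\<And>n. n \<ge> N \<Longrightarrow> Pk (r n) n" using rev unfolding eventually_sequentially by blast
  have "filterlim (\<lambda>n. real (r n)) at_top sequentially"
    using filterlim_compose[OF filterlim_real_sequentially rlim] .
  moreover have "\<forall>n>N. outer_prob M {\<omega> \<in> space M. \<exists>g\<in>cball 0 (real (r n)). \<exists>h\<in>cball 0 (real (r n)).
                fn \<rho> \<alpha> \<pi> \<Theta> \<theta>s V (\<Delta> n \<omega>) (\<lambda>i. X i \<omega>) n g h > \<eta>} \<le> \<epsilon>"
  proof (intro allI impI)
    fix n assume "n > N"
    then have Pn: "Pk (r n) n" using N by simp
    have "{\<omega> \<in> space M. \<exists>g\<in>cball 0 (real (r n)). \<exists>h\<in>cball 0 (real (r n)).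
                fn \<rho> \<alpha> \<pi> \<Theta> \<theta>s V (\<Delta> n \<omega>) (\<lambda>i. X i \<omega>) n g h > \<eta>} \<subseteq> E n (r n)"
    proof safe
      fix \<omega> g h assume om: "\<omega> \<in> space M" and g: "g \<in> cball 0 (real (r n))" and h: "h \<in> cball 0 (real (r n))"
        and f: "fn \<rho> \<alpha> \<pi> \<Theta> \<theta>s V (\<Delta> n \<omega>) (\<lambda>i. X i \<omega>) n g h > \<eta>"
      show "\<omega> \<in> E n (r n)"
      proof (rule ccontr)
        assume "\<omega> \<notin> E n (r n)"
        then have "\<bar>R n \<omega> y\<bar> \<le> c" if "y \<in> cball 0 (real (r n))" for y
          using om that unfolding E_def by (auto simp: not_less)
        then have "fn \<rho> \<alpha> \<pi> \<Theta> \<theta>s V (\<Delta> n \<omega>) (\<lambda>i. X i \<omega>) n g h \<le> \<eta>"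
          using key[OF om _ _ g h] Pn g h unfolding Pk_def by blast
        then show False using f by simp
      qed
    qed
    then have "outer_prob M {\<omega> \<in> space M. \<exists>g\<in>cball 0 (real (r n)). \<exists>h\<in>cball 0 (real (r n)).
                fn \<rho> \<alpha> \<pi> \<Theta> \<theta>s V (\<Delta> n \<omega>) (\<lambda>i. X i \<omega>) n g h > \<eta>} \<le> outer_prob M (E n (r n))"
      by (rule outer_prob_mono)
    also have "\<dots> < \<epsilon>" using Pn unfolding Pk_def by simp
    finally show "outer_prob M {\<omega> \<in> space M. \<exists>g\<in>cball 0 (real (r n)). \<exists>h\<in>cball 0 (real (r n)).
                fn \<rho> \<alpha> \<pi> \<Theta> \<theta>s V (\<Delta> n \<omega>) (\<lambda>i. X i \<omega>) n g h > \<eta>} \<le> \<epsilon>" by simp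
  qed
  ultimately show "\<exists>r :: nat \<Rightarrow> real. filterlim r at_top sequentially \<and>
          (\<exists>N::nat. \<forall>n>N.
             outer_prob M {\<omega> \<in> space M. \<exists>g\<in>cball 0 (r n). \<exists>h\<in>cball 0 (r n).
                fn \<rho> \<alpha> \<pi> \<Theta> \<theta>s V (\<Delta> n \<omega>) (\<lambda>i. X i \<omega>) n g h > \<eta>} \<le> \<epsilon>)" by blast
qed

end
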